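(* Let $\eta=4\times10^{-6}$. Then \[ \mathcal{N}\supset\Delta_1=\{(\gamma,\lambda)\in(0,1)^2: |\gamma-2^{-1/2}|<\eta,\ |\lambda-2^{-1/2}|<\eta\}, \] \[ \mathcal{M}\supset\Delta_2=\{\lambda\in\mathbb{D}: |\lambda-2^{-1/2}|<3\eta/4\}, \] \[ \mathcal{O}\supset\Delta_3=\{\lambda\in(0,1): |\lambda-2^{-1/2}|<\eta\}. \]
   Context: Let $\mathcal{B}=\{1+\sum_{n=1}^\infty a_n x^n : a_n\in\{-1,0,1\}\}$ (power series converging on the open unit disk $\mathbb{D}\subset\mathbb{C}$). Define $\mathcal{M}=\{z\in\mathbb{D}: \exists f\in\mathcal{B},\ f(z)=0\}$, $\mathcal{N}=\{(\gamma,\lambda)\in(-1,1)^2: \exists f\in\mathcal{B},\ f(\gamma)=f(\lambda)=0\}$, $\mathcal{O}=\{\lambda\in(-1,1): \exists f\in\mathcal{B},\ f(\lambda)=f'(\lambda)=0\}$. *)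

theory Defs
  imports "HOL-Analysis.Analysis"
begin

definition coeffsB :: "(nat \<Rightarrow> int) set" where
  "coeffsB = {a. a 0 = 1 \<and> (\<forall>n. a n \<in> {-1, 0, 1})}"

definition bser :: "(nat \<Rightarrow> int) \<Rightarrow> 'a::{real_normed_field,banach} \<Rightarrow> 'a" where
  "bser a z = (\<Sum>n. of_int (a n) * z ^ n)"

definition setM :: "complex set" where
  "setM = {z. norm z < 1 \<and> (\<exists>a\<in>coeffsB. bser a z = 0)}"

definition setN :: "(real \<times> real) set" where
  "setN = {(g, l). g \<in> {-1<..<1} \<and> l \<in> {-1<..<1} \<and>
             (\<exists>a\<in>coeffsB. bser a g = 0 \<and> bser a l = 0)}"

definition setO :: "real set" where
  "setO = {l. l \<in> {-1<..<1} \<and>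
             (\<exists>a\<in>coeffsB. bser a l = 0 \<and> deriv (bser a) l = 0)}"

end

theory Submission
  imports Defs
begin

section \<open>Verified covering check\<close>

definition inK :: "(real\<times>real\<times>real\<times>real) list \<Rightarrow> real \<Rightarrow> real \<Rightarrow> bool" where
  "inK cl u v \<longleftrightarrow> (\<exists>(a,c,l,h)\<in>set cl. a \<le> u \<and> u \<le> c \<and> l \<le> v \<and> v \<le> h)"

lemma inK_mono: "set cs \<subseteq> set cs' \<Longrightarrow> inK cs x y \<Longrightarrow> inK cs' x y"
  unfolding inK_def by blast

fun seg_ok :: "(real\<times>real\<times>real\<times>real) list \<Rightarrow> real \<Rightarrow> real \<Rightarrow> real \<Rightarrow> real \<Rightarrow> bool" where
  "seg_ok [] x1 x2 y1 y2 = False"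
| "seg_ok ((a,c,l,h)#cs) x1 x2 y1 y2 =
     (if c < x1 then seg_ok cs x1 x2 y1 y2
      else (a \<le> x1 \<and> l \<le> y1 \<and> y2 \<le> h \<and> (if x2 \<le> c then True else seg_ok cs c x2 y1 y2)))"

lemma seg_ok_sound:
  "seg_ok cs x1 x2 y1 y2 \<Longrightarrow> x1 \<le> x \<Longrightarrow> x \<le> x2 \<Longrightarrow> y1 \<le> y \<Longrightarrow> y \<le> y2 \<Longrightarrow> inK cs x y"
proof (induction cs arbitrary: x1)
  case Nil
  then show ?case by simp
next
  case (Cons col cs)
  obtain a c l h where col: "col = (a,c,l,h)" by (cases col) auto
  show ?case
  proof (cases "c < x1")
    case True
    then have "seg_ok cs x1 x2 y1 y2" using Cons.prems col by simp
    then have "inK cs x y" using Cons.IH Cons.prems by blast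
    then show ?thesis unfolding inK_def by auto
  next
    case False
    then have h: "a \<le> x1" "l \<le> y1" "y2 \<le> h" "x2 \<le> c \<or> seg_ok cs c x2 y1 y2"
      using Cons.prems col by (auto split: if_splits)
    show ?thesis
    proof (cases "x \<le> c")
      case True
      then show ?thesis using h Cons.prems col unfolding inK_def by (auto intro!: bexI[of _ "(a,c,l,h)"])
    next
      case False
      then have "seg_ok cs c x2 y1 y2" using h Cons.prems by auto
      then have "inK cs x y" using Cons.IH[of c] Cons.prems False by auto
      then show ?thesis unfolding inK_def by auto
    qed
  qed
qed

fun adv :: "real \<Rightarrow> (real\<times>real\<times>real\<times>real) list \<Rightarrow> (real\<times>real\<times>real\<times>real) list" where
  "adv x [] = []"
| "adv x ((a,c,l,h)#cs) = (if c < x then adv x cs else (a,c,l,h)#cs)"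

lemma set_adv: "set (adv x cs) \<subseteq> set cs"
  by (induction x cs rule: adv.induct) auto

definition lowI :: "real \<Rightarrow> real \<Rightarrow> real \<Rightarrow> real" where
  "lowI lo hi x = (if 0 \<le> x then lo * x else hi * x)"
definition highI :: "real \<Rightarrow> real \<Rightarrow> real \<Rightarrow> real" where
  "highI lo hi x = (if 0 \<le> x then hi * x else lo * x)"

lemma lowI_le: assumes "0 \<le> lo" "lo \<le> k" "k \<le> hi" "x \<le> y" shows "lowI lo hi x \<le> k * y"
proof -
  have "k * x \<le> k * y" using assms by (intro mult_left_mono) auto
  moreover have "lowI lo hi x \<le> k * x"
    using assms unfolding lowI_def
    by (auto intro: mult_right_mono mult_right_mono_neg)
  ultimately show ?thesis by linarith
qed

lemma highI_ge: assumes "0 \<le> lo" "lo \<le> k" "k \<le> hi" "y \<le> x" shows "k * y \<le> highI lo hi x"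
proof -
  have "k * y \<le> k * x" using assms by (intro mult_left_mono) auto
  moreover have "k * x \<le> highI lo hi x"
    using assms unfolding highI_def
    by (auto intro: mult_right_mono mult_right_mono_neg)
  ultimately show ?thesis by linarith
qed

definition piece_ok :: "(real\<times>real\<times>real\<times>real) list \<Rightarrow> real \<Rightarrow> real \<Rightarrow> real \<Rightarrow> real \<Rightarrow> int \<Rightarrow> bool" where
  "piece_ok cl a c p q b = (-128 \<le> p \<and> q \<le> 128 \<and>
     seg_ok cl (lowI 5792 5793 (a - 16 * of_int b) - 1) (highI 5792 5793 (c - 16 * of_int b) + 1)
        (lowI 5792 5793 p - highI 8191 8193 (c - 16 * of_int b))
        (highI 5792 5793 q - lowI 8191 8193 (a - 16 * of_int b)))"

definition parbox :: "real \<Rightarrow> real \<Rightarrow> real \<Rightarrow> real \<Rightarrow> bool" where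
  "parbox al be ga de \<longleftrightarrow> 5792 \<le> 4096 * al \<and> 4096 * al \<le> 5793 \<and> 5792 \<le> 4096 * de \<and> 4096 * de \<le> 5793
     \<and> 8191 \<le> 4096 * ga \<and> 4096 * ga \<le> 8193 \<and> 0 \<le> be \<and> 524288 * be \<le> 1"

lemma piece_ok_sound:
  assumes "piece_ok cl a c p q b" "a \<le> 16 * u" "16 * u \<le> c" "p \<le> 16 * v" "16 * v \<le> q"
    and "parbox al be ga de"
  shows "inK cl (65536 * (al * (u - of_int b) + be * v)) (65536 * (de * v - ga * (u - of_int b)))"
proof -
  have pb: "5792 \<le> 4096 * al" "4096 * al \<le> 5793" "5792 \<le> 4096 * de" "4096 * de \<le> 5793"
     "8191 \<le> 4096 * ga" "4096 * ga \<le> 8193" "0 \<le> be" "524288 * be \<le> 1"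
    using assms(6) unfolding parbox_def by auto
  have pq: "-128 \<le> p" "q \<le> 128" using assms(1) unfolding piece_ok_def by auto
  have eq1: "65536 * (al * (u - of_int b) + be * v) = (4096 * al) * (16 * u - 16 * of_int b) + 65536 * be * v"
    by (simp add: algebra_simps)
  have eq2: "65536 * (de * v - ga * (u - of_int b)) = (4096 * de) * (16 * v) - (4096 * ga) * (16 * u - 16 * of_int b)"
    by (simp add: algebra_simps)
  have bv: "\<bar>65536 * be * v\<bar> \<le> 1"
  proof -
    have "\<bar>v\<bar> \<le> 8" using assms pq by auto
    then have "\<bar>be\<bar> * \<bar>v\<bar> \<le> (1/524288) * 8" using pb by (intro mult_mono) auto
    then show ?thesis by (simp add: abs_mult)
  qed
  have "lowI 5792 5793 (a - 16 * of_int b) \<le> (4096 * al) * (16 * u - 16 * of_int b)"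
    using assms pb by (intro lowI_le) auto
  moreover have "(4096 * al) * (16 * u - 16 * of_int b) \<le> highI 5792 5793 (c - 16 * of_int b)"
    using assms pb by (intro highI_ge) auto
  moreover have "lowI 5792 5793 p \<le> (4096 * de) * (16 * v)" using assms pb by (intro lowI_le) auto
  moreover have "(4096 * de) * (16 * v) \<le> highI 5792 5793 q" using assms pb by (intro highI_ge) auto
  moreover have "lowI 8191 8193 (a - 16 * of_int b) \<le> (4096 * ga) * (16 * u - 16 * of_int b)"
    using assms pb by (intro lowI_le) auto
  moreover have "(4096 * ga) * (16 * u - 16 * of_int b) \<le> highI 8191 8193 (c - 16 * of_int b)"
    using assms pb by (intro highI_ge) auto
  moreover have "seg_ok cl (lowI 5792 5793 (a - 16 * of_int b) - 1) (highI 5792 5793 (c - 16 * of_int b) + 1)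
        (lowI 5792 5793 p - highI 8191 8193 (c - 16 * of_int b))
        (highI 5792 5793 q - lowI 8191 8193 (a - 16 * of_int b))"
    using assms(1) unfolding piece_ok_def by blast
  ultimately show ?thesis unfolding eq1 eq2 using bv
    by (elim seg_ok_sound) (simp_all only: abs_le_iff, linarith+)
qed

fun cov :: "real \<Rightarrow> real \<Rightarrow> (real\<times>real\<times>int) list \<Rightarrow> bool" where
  "cov lo hi [] = False"
| "cov lo hi ((p,q,b)#ps) = (p \<le> lo \<and> b \<in> {-1,0,1} \<and> (if hi \<le> q then True else cov q hi ps))"

lemma cov_sound:
  assumes "cov lo hi ps" "lo \<le> v" "v \<le> hi"
  shows "\<exists>(p,q,b)\<in>set ps. b \<in> {-1,0,1} \<and> p \<le> v \<and> v \<le> q"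
  using assms
proof (induction ps arbitrary: lo)
  case Nil
  then show ?case by simp
next
  case (Cons pc ps)
  obtain p q b where pc: "pc = (p,q,b)" by (cases pc) auto
  show ?case
  proof (cases "v \<le> q")
    case True
    then show ?thesis using Cons.prems pc by auto
  next
    case False
    then have "cov q hi ps" using Cons.prems pc by (auto split: if_splits)
    then show ?thesis using Cons.IH[of q] Cons.prems False by auto
  qed
qed

fun pcs :: "int \<Rightarrow> (real\<times>real\<times>real\<times>real) list \<Rightarrow> real \<Rightarrow> real \<Rightarrow> (real\<times>real\<times>int) list \<Rightarrow> bool" where
  "pcs b cur a c [] = True"
| "pcs b cur a c ((p,q,b')#ps) = ((if b' = b then piece_ok cur a c p q b else True) \<and> pcs b cur a c ps)"

fun pass :: "int \<Rightarrow> (real\<times>real\<times>real\<times>real) list \<Rightarrow> (real\<times>real\<times>real\<times>real\<times>(real\<times>real\<times>int) list) list \<Rightarrow> bool" where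
  "pass b cur [] = True"
| "pass b cur ((a,c,l,h,ps)#sp) =
     (pcs b (adv (lowI 5792 5793 (a - 16 * of_int b) - 2) cur) a c ps \<and>
      pass b (adv (lowI 5792 5793 (a - 16 * of_int b) - 2) cur) sp)"

lemma pcs_sound: "pcs b cur a c ps \<Longrightarrow> (p,q,b) \<in> set ps \<Longrightarrow> piece_ok cur a c p q b"
  by (induction b cur a c ps rule: pcs.induct) (auto split: if_splits)

lemma pass_sound:
  "pass b cur sp \<Longrightarrow> set cur \<subseteq> set cl \<Longrightarrow> (a,c,l,h,ps) \<in> set sp \<Longrightarrow> (p,q,b) \<in> set ps
   \<Longrightarrow> \<exists>cur'. set cur' \<subseteq> set cl \<and> piece_ok cur' a c p q b"
proof (induction b cur sp rule: pass.induct)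
  case (1 b cur)
  then show ?case by simp
next
  case (2 b cur a' c' l' h' ps' sp)
  let ?cur = "adv (lowI 5792 5793 (a' - 16 * of_int b) - 2) cur"
  have sub: "set ?cur \<subseteq> set cl" using set_adv 2(3) by blast
  show ?case
  proof (cases "(a,c,l,h,ps) = (a',c',l',h',ps')")
    case True
    then have "piece_ok ?cur a c p q b" using 2 by (auto intro: pcs_sound)
    then show ?thesis using sub by blast
  next
    case False
    then show ?thesis using 2 sub by auto
  qed
qed

definition check_all :: "(real\<times>real\<times>real\<times>real\<times>(real\<times>real\<times>int) list) list \<Rightarrow> (real\<times>real\<times>real\<times>real) list \<Rightarrow> bool" where
  "check_all sp cl \<longleftrightarrow> list_all (\<lambda>(a,c,l,h,ps). cov l h ps \<and> -64 \<le> a \<and> c \<le> 64 \<and> -128 \<le> l \<and> h \<le> 128) sp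
     \<and> pass (-1) cl sp \<and> pass 0 cl sp \<and> pass 1 cl sp
     \<and> map (\<lambda>(a,c,l,h,ps). (4096 * a, 4096 * c, 4096 * l, 4096 * h)) sp = cl"

lemma seg_ok_cong: "x1 = x1' \<Longrightarrow> x2 = x2' \<Longrightarrow> y1 = y1' \<Longrightarrow> y2 = y2' \<Longrightarrow> seg_ok cs x1 x2 y1 y2 = seg_ok cs x1' x2' y1' y2'"
  by simp
lemma adv_cong: "x = x' \<Longrightarrow> adv x cs = adv x' cs" by simp
lemma pcs_cong: "cur = cur' \<Longrightarrow> pcs b cur a c ps = pcs b cur' a c ps" by simp
lemma pass_cong: "cur = cur' \<Longrightarrow> pass b cur sp = pass b cur' sp" by simp

lemma check_all_sound:
  assumes "check_all sp cl" "inK cl (65536 * u) (65536 * v)" "parbox al be ga de"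
  shows "\<exists>b::int. b \<in> {-1,0,1} \<and> inK cl (65536 * (al * (u - of_int b) + be * v)) (65536 * (de * v - ga * (u - of_int b)))"
proof -
  obtain A C L H where col: "(A,C,L,H) \<in> set cl" "A \<le> 65536 * u" "65536 * u \<le> C" "L \<le> 65536 * v" "65536 * v \<le> H"
    using assms(2) unfolding inK_def by auto
  have m: "map (\<lambda>(a,c,l,h,ps). (4096 * a, 4096 * c, 4096 * l, 4096 * h)) sp = cl" using assms(1) unfolding check_all_def by blast
  then obtain a c l h ps where e: "(a,c,l,h,ps) \<in> set sp" "(A,C,L,H) = (4096 * a, 4096 * c, 4096 * l, 4096 * h)"
    using col(1) by auto
  have "cov l h ps" using assms(1) e(1) unfolding check_all_def list_all_iff by fastforce
  moreover have "l \<le> 16 * v" "16 * v \<le> h" "a \<le> 16 * u" "16 * u \<le> c" using col e(2) by auto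
  ultimately obtain p q b where pqb: "(p,q,b) \<in> set ps" "b \<in> {-1,0,1}" "p \<le> 16 * v" "16 * v \<le> q"
    using cov_sound by blast
  have "pass b cl sp" using assms(1) pqb(2) unfolding check_all_def by auto
  then obtain cur' where "set cur' \<subseteq> set cl" "piece_ok cur' a c p q b"
    using pass_sound[of b cl sp cl a c l h ps p q] e(1) pqb(1) by auto
  then have "inK cl (65536 * (al * (u - of_int b) + be * v)) (65536 * (de * v - ga * (u - of_int b)))"
    using piece_ok_sound[OF _ _ _ pqb(3,4) assms(3)] \<open>a \<le> 16 * u\<close> \<open>16 * u \<le> c\<close> inK_mono by blast
  then show ?thesis using pqb(2) by blast
qed

lemma check_all_bound:
  assumes "check_all sp cl" "inK cl (65536 * u) (65536 * v)"
  shows "\<bar>u\<bar> \<le> 4 \<and> \<bar>v\<bar> \<le> 8"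
proof -
  obtain A C L H where col: "(A,C,L,H) \<in> set cl" "A \<le> 65536 * u" "65536 * u \<le> C" "L \<le> 65536 * v" "65536 * v \<le> H"
    using assms(2) unfolding inK_def by auto
  have m: "map (\<lambda>(a,c,l,h,ps). (4096 * a, 4096 * c, 4096 * l, 4096 * h)) sp = cl" using assms(1) unfolding check_all_def by blast
  then obtain a c l h ps where e: "(a,c,l,h,ps) \<in> set sp" "(A,C,L,H) = (4096 * a, 4096 * c, 4096 * l, 4096 * h)"
    using col(1) by auto
  have "-64 \<le> a \<and> c \<le> 64 \<and> -128 \<le> l \<and> h \<le> 128" using assms(1) e(1) unfolding check_all_def list_all_iff by fastforce
  then show ?thesis using col e(2) by auto
qed

definition specD :: "(real\<times>real\<times>real\<times>real\<times>(real\<times>real\<times>int) list) list" where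
  "specD = [(- 49, - 48, - 119, - 112, [(- 119, - 112, - 1)]),
  (- 48, - 47, - 113, - 108, [(- 113, - 108, - 1)]),
  (- 47, - 46, - 108, - 92, [(- 108, - 92, - 1)]),
  (- 46, - 45, - 105, - 88, [(- 105, - 88, - 1)]),
  (- 45, - 44, - 102, - 80, [(- 102, - 80, - 1)]),
  (- 44, - 43, - 98, - 68, [(- 98, - 68, - 1)]),
  (- 43, - 42, - 93, - 64, [(- 93, - 64, - 1)]),
  (- 42, - 41, - 91, - 54, [(- 91, - 54, - 1)]),
  (- 41, - 40, - 89, - 50, [(- 89, - 50, - 1)]),
  (- 40, - 39, - 91, - 40, [(- 91, - 40, - 1)]),
  (- 39, - 38, - 86, - 36, [(- 86, - 36, - 1)]),
  (- 38, - 37, - 82, - 30, [(- 82, - 30, - 1)]),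
  (- 37, - 36, - 80, - 24, [(- 80, - 24, - 1)]),
  (- 36, - 35, - 79, - 20, [(- 79, - 20, - 1)]),
  (- 35, - 34, - 89, - 11, [(- 89, - 11, - 1)]),
  (- 34, - 33, - 86, - 8, [(- 86, - 8, - 1)]),
  (- 33, - 32, - 83, - 4, [(- 83, - 4, - 1)]),
  (- 32, - 31, - 79, 2, [(- 79, 2, - 1)]),
  (- 31, - 30, - 75, 4, [(- 75, 4, - 1)]),
  (- 30, - 29, - 74, 9, [(- 74, 9, - 1)]),
  (- 29, - 28, - 75, 13, [(- 75, 13, - 1)]),
  (- 28, - 27, - 98, 19, [(- 98, - 68, 0), (- 71, 19, - 1)]),
  (- 27, - 26, - 93, 23, [(- 93, - 64, 0), (- 67, 23, - 1)]),
  (- 26, - 25, - 91, 26, [(- 91, - 54, 0), (- 65, 26, - 1)]),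
  (- 25, - 24, - 89, 29, [(- 89, - 50, 0), (- 64, 29, - 1)]),
  (- 24, - 23, - 91, 33, [(- 91, - 40, 0), (- 74, 33, - 1)]),
  (- 23, - 22, - 86, 40, [(- 86, - 36, 0), (- 71, 40, - 1)]),
  (- 22, - 21, - 82, 36, [(- 82, - 30, 0), (- 69, 36, - 1)]),
  (- 21, - 20, - 80, 38, [(- 80, - 24, 0), (- 63, 38, - 1)]),
  (- 20, - 19, - 79, 41, [(- 79, - 20, 0), (- 60, 41, - 1)]),
  (- 19, - 18, - 89, 45, [(- 89, - 11, 0), (- 58, 45, - 1)]),
  (- 18, - 17, - 86, 49, [(- 86, - 8, 0), (- 62, 49, - 1)]),
  (- 17, - 16, - 83, 51, [(- 83, - 4, 0), (- 55, 51, - 1)]),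
  (- 16, - 15, - 79, 55, [(- 79, 2, 0), (- 51, 55, - 1)]),
  (- 15, - 14, - 75, 62, [(- 75, 4, 0), (- 49, 62, - 1)]),
  (- 14, - 13, - 74, 58, [(- 74, 9, 0), (- 45, 58, - 1)]),
  (- 13, - 12, - 75, 60, [(- 75, 13, 0), (- 41, 60, - 1)]),
  (- 12, - 11, - 98, 63, [(- 98, - 68, 1), (- 71, 19, 0), (- 38, 63, - 1)]),
  (- 11, - 10, - 93, 69, [(- 93, - 64, 1), (- 67, 23, 0), (- 36, 69, - 1)]),
  (- 10, - 9, - 91, 71, [(- 91, - 54, 1), (- 65, 26, 0), (- 40, 71, - 1)]),
  (- 9, - 8, - 89, 74, [(- 89, - 50, 1), (- 64, 29, 0), (- 33, 74, - 1)]),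
  (- 8, - 7, - 91, 64, [(- 91, - 40, 1), (- 74, 33, 0), (- 29, 64, - 1)]),
  (- 7, - 6, - 86, 65, [(- 86, - 36, 1), (- 71, 40, 0), (- 26, 65, - 1)]),
  (- 6, - 5, - 82, 67, [(- 82, - 30, 1), (- 69, 36, 0), (- 23, 67, - 1)]),
  (- 5, - 4, - 80, 71, [(- 80, - 24, 1), (- 63, 38, 0), (- 19, 71, - 1)]),
  (- 4, - 3, - 79, 75, [(- 79, - 20, 1), (- 60, 41, 0), (- 13, 75, - 1)]),
  (- 3, - 2, - 89, 74, [(- 89, - 11, 1), (- 58, 45, 0), (- 9, 74, - 1)]),
  (- 2, - 1, - 86, 75, [(- 86, - 8, 1), (- 62, 49, 0), (- 4, 75, - 1)]),
  (- 1, 0, - 83, 79, [(- 83, - 4, 1), (- 55, 51, 0), (- 2, 79, - 1)]),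
  (0, 1, - 79, 83, [(- 79, 2, 1), (- 51, 55, 0), (4, 83, - 1)]),
  (1, 2, - 75, 86, [(- 75, 4, 1), (- 49, 62, 0), (8, 86, - 1)]),
  (2, 3, - 74, 89, [(- 74, 9, 1), (- 45, 58, 0), (11, 89, - 1)]),
  (3, 4, - 75, 79, [(- 75, 13, 1), (- 41, 60, 0), (20, 79, - 1)]),
  (4, 5, - 71, 80, [(- 71, 19, 1), (- 38, 63, 0), (24, 80, - 1)]),
  (5, 6, - 67, 82, [(- 67, 23, 1), (- 36, 69, 0), (30, 82, - 1)]),
  (6, 7, - 65, 86, [(- 65, 26, 1), (- 40, 71, 0), (36, 86, - 1)]),
  (7, 8, - 64, 91, [(- 64, 29, 1), (- 33, 74, 0), (40, 91, - 1)]),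
  (8, 9, - 74, 89, [(- 74, 33, 1), (- 29, 64, 0), (50, 89, - 1)]),
  (9, 10, - 71, 91, [(- 71, 40, 1), (- 26, 65, 0), (54, 91, - 1)]),
  (10, 11, - 69, 93, [(- 69, 36, 1), (- 23, 67, 0), (64, 93, - 1)]),
  (11, 12, - 63, 98, [(- 63, 38, 1), (- 19, 71, 0), (68, 98, - 1)]),
  (12, 13, - 60, 75, [(- 60, 41, 1), (- 13, 75, 0)]),
  (13, 14, - 58, 74, [(- 58, 45, 1), (- 9, 74, 0)]),
  (14, 15, - 62, 75, [(- 62, 49, 1), (- 4, 75, 0)]),
  (15, 16, - 55, 79, [(- 55, 51, 1), (- 2, 79, 0)]),
  (16, 17, - 51, 83, [(- 51, 55, 1), (4, 83, 0)]),
  (17, 18, - 49, 86, [(- 49, 62, 1), (8, 86, 0)]),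
  (18, 19, - 45, 89, [(- 45, 58, 1), (11, 89, 0)]),
  (19, 20, - 41, 79, [(- 41, 60, 1), (20, 79, 0)]),
  (20, 21, - 38, 80, [(- 38, 63, 1), (24, 80, 0)]),
  (21, 22, - 36, 82, [(- 36, 69, 1), (30, 82, 0)]),
  (22, 23, - 40, 86, [(- 40, 71, 1), (36, 86, 0)]),
  (23, 24, - 33, 91, [(- 33, 74, 1), (40, 91, 0)]),
  (24, 25, - 29, 89, [(- 29, 64, 1), (50, 89, 0)]),
  (25, 26, - 26, 91, [(- 26, 65, 1), (54, 91, 0)]),
  (26, 27, - 23, 93, [(- 23, 67, 1), (64, 93, 0)]),
  (27, 28, - 19, 98, [(- 19, 71, 1), (68, 98, 0)]),
  (28, 29, - 13, 75, [(- 13, 75, 1)]),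
  (29, 30, - 9, 74, [(- 9, 74, 1)]),
  (30, 31, - 4, 75, [(- 4, 75, 1)]),
  (31, 32, - 2, 79, [(- 2, 79, 1)]),
  (32, 33, 4, 83, [(4, 83, 1)]),
  (33, 34, 8, 86, [(8, 86, 1)]),
  (34, 35, 11, 89, [(11, 89, 1)]),
  (35, 36, 20, 79, [(20, 79, 1)]),
  (36, 37, 24, 80, [(24, 80, 1)]),
  (37, 38, 30, 82, [(30, 82, 1)]),
  (38, 39, 36, 86, [(36, 86, 1)]),
  (39, 40, 40, 91, [(40, 91, 1)]),
  (40, 41, 50, 89, [(50, 89, 1)]),
  (41, 42, 54, 91, [(54, 91, 1)]),
  (42, 43, 64, 93, [(64, 93, 1)]),
  (43, 44, 68, 98, [(68, 98, 1)]),
  (44, 45, 80, 102, [(80, 102, 1)]),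
  (45, 46, 88, 105, [(88, 105, 1)]),
  (46, 47, 92, 108, [(92, 108, 1)]),
  (47, 48, 108, 113, [(108, 113, 1)]),
  (48, 49, 112, 119, [(112, 119, 1)])]"

definition clD :: "(real\<times>real\<times>real\<times>real) list" where
  "clD = [(- 200704, - 196608, - 487424, - 458752),
  (- 196608, - 192512, - 462848, - 442368),
  (- 192512, - 188416, - 442368, - 376832),
  (- 188416, - 184320, - 430080, - 360448),
  (- 184320, - 180224, - 417792, - 327680),
  (- 180224, - 176128, - 401408, - 278528),
  (- 176128, - 172032, - 380928, - 262144),
  (- 172032, - 167936, - 372736, - 221184),
  (- 167936, - 163840, - 364544, - 204800),
  (- 163840, - 159744, - 372736, - 163840),
  (- 159744, - 155648, - 352256, - 147456),
  (- 155648, - 151552, - 335872, - 122880),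
  (- 151552, - 147456, - 327680, - 98304),
  (- 147456, - 143360, - 323584, - 81920),
  (- 143360, - 139264, - 364544, - 45056),
  (- 139264, - 135168, - 352256, - 32768),
  (- 135168, - 131072, - 339968, - 16384),
  (- 131072, - 126976, - 323584, 8192),
  (- 126976, - 122880, - 307200, 16384),
  (- 122880, - 118784, - 303104, 36864),
  (- 118784, - 114688, - 307200, 53248),
  (- 114688, - 110592, - 401408, 77824),
  (- 110592, - 106496, - 380928, 94208),
  (- 106496, - 102400, - 372736, 106496),
  (- 102400, - 98304, - 364544, 118784),
  (- 98304, - 94208, - 372736, 135168),
  (- 94208, - 90112, - 352256, 163840),
  (- 90112, - 86016, - 335872, 147456),
  (- 86016, - 81920, - 327680, 155648),
  (- 81920, - 77824, - 323584, 167936),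
  (- 77824, - 73728, - 364544, 184320),
  (- 73728, - 69632, - 352256, 200704),
  (- 69632, - 65536, - 339968, 208896),
  (- 65536, - 61440, - 323584, 225280),
  (- 61440, - 57344, - 307200, 253952),
  (- 57344, - 53248, - 303104, 237568),
  (- 53248, - 49152, - 307200, 245760),
  (- 49152, - 45056, - 401408, 258048),
  (- 45056, - 40960, - 380928, 282624),
  (- 40960, - 36864, - 372736, 290816),
  (- 36864, - 32768, - 364544, 303104),
  (- 32768, - 28672, - 372736, 262144),
  (- 28672, - 24576, - 352256, 266240),
  (- 24576, - 20480, - 335872, 274432),
  (- 20480, - 16384, - 327680, 290816),
  (- 16384, - 12288, - 323584, 307200),
  (- 12288, - 8192, - 364544, 303104),
  (- 8192, - 4096, - 352256, 307200),
  (- 4096, 0, - 339968, 323584),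
  (0, 4096, - 323584, 339968),
  (4096, 8192, - 307200, 352256),
  (8192, 12288, - 303104, 364544),
  (12288, 16384, - 307200, 323584),
  (16384, 20480, - 290816, 327680),
  (20480, 24576, - 274432, 335872),
  (24576, 28672, - 266240, 352256),
  (28672, 32768, - 262144, 372736),
  (32768, 36864, - 303104, 364544),
  (36864, 40960, - 290816, 372736),
  (40960, 45056, - 282624, 380928),
  (45056, 49152, - 258048, 401408),
  (49152, 53248, - 245760, 307200),
  (53248, 57344, - 237568, 303104),
  (57344, 61440, - 253952, 307200),
  (61440, 65536, - 225280, 323584),
  (65536, 69632, - 208896, 339968),
  (69632, 73728, - 200704, 352256),
  (73728, 77824, - 184320, 364544),
  (77824, 81920, - 167936, 323584),
  (81920, 86016, - 155648, 327680),
  (86016, 90112, - 147456, 335872),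
  (90112, 94208, - 163840, 352256),
  (94208, 98304, - 135168, 372736),
  (98304, 102400, - 118784, 364544),
  (102400, 106496, - 106496, 372736),
  (106496, 110592, - 94208, 380928),
  (110592, 114688, - 77824, 401408),
  (114688, 118784, - 53248, 307200),
  (118784, 122880, - 36864, 303104),
  (122880, 126976, - 16384, 307200),
  (126976, 131072, - 8192, 323584),
  (131072, 135168, 16384, 339968),
  (135168, 139264, 32768, 352256),
  (139264, 143360, 45056, 364544),
  (143360, 147456, 81920, 323584),
  (147456, 151552, 98304, 327680),
  (151552, 155648, 122880, 335872),
  (155648, 159744, 147456, 352256),
  (159744, 163840, 163840, 372736),
  (163840, 167936, 204800, 364544),
  (167936, 172032, 221184, 372736),
  (172032, 176128, 262144, 380928),
  (176128, 180224, 278528, 401408),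
  (180224, 184320, 327680, 417792),
  (184320, 188416, 360448, 430080),
  (188416, 192512, 376832, 442368),
  (192512, 196608, 442368, 462848),
  (196608, 200704, 458752, 487424)]"

lemma check_ok: "check_all specD clD"
  unfolding check_all_def specD_def clD_def
  by (simp add: piece_ok_def lowI_def highI_def cong: seg_ok_cong adv_cong pcs_cong pass_cong)

lemma target_ok: "seg_ok clD (- 92688) (- 92672) 131056 131088"
  unfolding clD_def by simp

section \<open>Representation from a covering\<close>

fun EF :: "real \<Rightarrow> real \<Rightarrow> real \<Rightarrow> nat \<Rightarrow> real \<times> real \<times> real \<times> real" where
  "EF p q r 0 = (1, 0, 0, 1)"
| "EF p q r (Suc n) = (case EF p q r n of (e1, e2, f1, f2) \<Rightarrow> (p * e1 + f1, p * e2 + f2, q * e1 + r * f1, q * e2 + r * f2))"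

definition "E1 p q r n = fst (EF p q r n)"
definition "E2 p q r n = fst (snd (EF p q r n))"
definition "F1 p q r n = fst (snd (snd (EF p q r n)))"
definition "F2 p q r n = snd (snd (snd (EF p q r n)))"

lemma EF_Suc:
  "E1 p q r (Suc n) = p * E1 p q r n + F1 p q r n"
  "E2 p q r (Suc n) = p * E2 p q r n + F2 p q r n"
  "F1 p q r (Suc n) = q * E1 p q r n + r * F1 p q r n"
  "F2 p q r (Suc n) = q * E2 p q r n + r * F2 p q r n"
  unfolding E1_def E2_def F1_def F2_def by (simp_all split: prod.splits)

lemma EF_0: "E1 p q r 0 = 1" "E2 p q r 0 = 0" "F1 p q r 0 = 0" "F2 p q r 0 = 1"
  unfolding E1_def E2_def F1_def F2_def by simp_all

lemma represent:
  fixes p q r al be ga de u0 v0 :: real and Kp :: "real \<Rightarrow> real \<Rightarrow> bool"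
  assumes cov: "\<And>u v. Kp u v \<Longrightarrow> \<exists>b::int. b \<in> {-1,0,1} \<and> Kp (al * (u - of_int b) + be * v) (de * v - ga * (u - of_int b))"
    and bnd: "\<And>u v. Kp u v \<Longrightarrow> \<bar>u\<bar> \<le> 4 \<and> \<bar>v\<bar> \<le> 8"
    and inv1: "\<And>w v. p * (al * w + be * v) + q * (de * v - ga * w) = w"
    and inv2: "\<And>w v. (al * w + be * v) + r * (de * v - ga * w) = v"
    and l1: "E1 p q r \<longlonglongrightarrow> 0" and l2: "E2 p q r \<longlonglongrightarrow> 0"
    and l3: "F1 p q r \<longlonglongrightarrow> 0" and l4: "F2 p q r \<longlonglongrightarrow> 0"
    and k0: "Kp u0 v0"
  shows "\<exists>b::nat\<Rightarrow>int. (\<forall>n. b n \<in> {-1,0,1}) \<and> (\<lambda>n. of_int (b n) * E1 p q r n) sums u0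
            \<and> (\<lambda>n. of_int (b n) * E2 p q r n) sums v0"
proof -
  define step where "step = (\<lambda>(b::int) (z::real\<times>real). (al * (fst z - of_int b) + be * snd z, de * snd z - ga * (fst z - of_int b)))"
  define nb where "nb = (\<lambda>z::real\<times>real. SOME b::int. b \<in> {-1,0,1} \<and> Kp (fst (step b z)) (snd (step b z)))"
  define zs where "zs = rec_nat (u0, v0) (\<lambda>n z. step (nb z) z)"
  have zs0: "zs 0 = (u0, v0)" and zsS: "\<And>n. zs (Suc n) = step (nb (zs n)) (zs n)"
    unfolding zs_def by simp_all
  have nbK: "nb z \<in> {-1,0,1} \<and> Kp (fst (step (nb z) z)) (snd (step (nb z) z))" if kz: "Kp (fst z) (snd z)" for z
  proof -
    obtain b :: int where "b \<in> {-1,0,1} \<and> Kp (fst (step b z)) (snd (step b z))"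
      using cov[OF kz] unfolding step_def by (auto simp: case_prod_beta)
    then show ?thesis unfolding nb_def by (rule someI)
  qed
  have K: "Kp (fst (zs n)) (snd (zs n))" for n
  proof (induction n)
    case 0
    then show ?case using k0 zs0 by simp
  next
    case (Suc n)
    then show ?case using nbK[OF Suc] zsS[of n] by simp
  qed
  define b where "b = (\<lambda>n. nb (zs n))"
  have bin: "b n \<in> {-1,0,1}" for n unfolding b_def using nbK[OF K] by blast
  let ?E1 = "E1 p q r" and ?E2 = "E2 p q r" and ?F1 = "F1 p q r" and ?F2 = "F2 p q r"
  have rec: "fst (zs n) = of_int (b n) + p * fst (zs (Suc n)) + q * snd (zs (Suc n))
           \<and> snd (zs n) = fst (zs (Suc n)) + r * snd (zs (Suc n))" for n
  proof -
    have "zs (Suc n) = step (b n) (zs n)" using zsS b_def by simp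
    then have a: "fst (zs (Suc n)) = al * (fst (zs n) - of_int (b n)) + be * snd (zs n)"
      and c: "snd (zs (Suc n)) = de * snd (zs n) - ga * (fst (zs n) - of_int (b n))"
      unfolding step_def by auto
    show ?thesis using inv1[of "fst (zs n) - of_int (b n)" "snd (zs n)"] inv2[of "fst (zs n) - of_int (b n)" "snd (zs n)"]
      unfolding a c by simp
  qed
  have ident: "u0 = (\<Sum>k<n. of_int (b k) * ?E1 k) + fst (zs n) * ?E1 n + snd (zs n) * ?F1 n
             \<and> v0 = (\<Sum>k<n. of_int (b k) * ?E2 k) + fst (zs n) * ?E2 n + snd (zs n) * ?F2 n" for n
  proof (induction n)
    case 0
    then show ?case using zs0 by (simp add: EF_0)
  next
    case (Suc n)
    have e1: "fst (zs n) * ?E1 n + snd (zs n) * ?F1 n = of_int (b n) * ?E1 n + fst (zs (Suc n)) * ?E1 (Suc n) + snd (zs (Suc n)) * ?F1 (Suc n)"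
      using rec[of n] by (simp add: EF_Suc algebra_simps)
    have e2: "fst (zs n) * ?E2 n + snd (zs n) * ?F2 n = of_int (b n) * ?E2 n + fst (zs (Suc n)) * ?E2 (Suc n) + snd (zs (Suc n)) * ?F2 (Suc n)"
      using rec[of n] by (simp add: EF_Suc algebra_simps)
    show ?case using Suc.IH e1 e2 by simp
  qed
  have rem0: "(\<lambda>n. fst (zs n) * X n + snd (zs n) * Y n) \<longlonglongrightarrow> 0"
    if X: "X \<longlonglongrightarrow> 0" and Y: "Y \<longlonglongrightarrow> 0" for X Y :: "nat \<Rightarrow> real"
  proof -
    have "(\<lambda>n. 4 * \<bar>X n\<bar> + 8 * \<bar>Y n\<bar>) \<longlonglongrightarrow> 4 * \<bar>0\<bar> + 8 * \<bar>0\<bar>"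
      by (intro tendsto_intros X Y)
    then have t: "(\<lambda>n. 4 * \<bar>X n\<bar> + 8 * \<bar>Y n\<bar>) \<longlonglongrightarrow> 0" by simp
    have ev: "\<forall>n. norm (fst (zs n) * X n + snd (zs n) * Y n) \<le> 4 * \<bar>X n\<bar> + 8 * \<bar>Y n\<bar>"
    proof
      fix n
      have bb: "\<bar>fst (zs n)\<bar> \<le> 4" "\<bar>snd (zs n)\<bar> \<le> 8" using bnd[OF K[of n]] by auto
      have "\<bar>fst (zs n) * X n\<bar> \<le> 4 * \<bar>X n\<bar>" unfolding abs_mult using bb by (intro mult_right_mono) auto
      moreover have "\<bar>snd (zs n) * Y n\<bar> \<le> 8 * \<bar>Y n\<bar>" unfolding abs_mult using bb by (intro mult_right_mono) auto
      ultimately show "norm (fst (zs n) * X n + snd (zs n) * Y n) \<le> 4 * \<bar>X n\<bar> + 8 * \<bar>Y n\<bar>" by simp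
    qed
    show ?thesis by (rule Lim_null_comparison[OF always_eventually[OF ev] t])
  qed
  have s1: "(\<lambda>n. of_int (b n) * ?E1 n) sums u0"
  proof -
    have "(\<lambda>n. u0 - (fst (zs n) * ?E1 n + snd (zs n) * ?F1 n)) \<longlonglongrightarrow> u0 - 0"
      by (intro tendsto_intros rem0 l1 l3)
    moreover have "(\<lambda>n. u0 - (fst (zs n) * ?E1 n + snd (zs n) * ?F1 n)) = (\<lambda>n. \<Sum>k<n. of_int (b k) * ?E1 k)"
    proof (rule ext)
      fix n show "u0 - (fst (zs n) * ?E1 n + snd (zs n) * ?F1 n) = (\<Sum>k<n. of_int (b k) * ?E1 k)"
        using conjunct1[OF ident[of n]] by linarith
    qed
    ultimately show ?thesis unfolding sums_def by simp
  qed
  have s2: "(\<lambda>n. of_int (b n) * ?E2 n) sums v0"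
  proof -
    have "(\<lambda>n. v0 - (fst (zs n) * ?E2 n + snd (zs n) * ?F2 n)) \<longlonglongrightarrow> v0 - 0"
      by (intro tendsto_intros rem0 l2 l4)
    moreover have "(\<lambda>n. v0 - (fst (zs n) * ?E2 n + snd (zs n) * ?F2 n)) = (\<lambda>n. \<Sum>k<n. of_int (b k) * ?E2 k)"
    proof (rule ext)
      fix n show "v0 - (fst (zs n) * ?E2 n + snd (zs n) * ?F2 n) = (\<Sum>k<n. of_int (b k) * ?E2 k)"
        using conjunct2[OF ident[of n]] by linarith
    qed
    ultimately show ?thesis unfolding sums_def by simp
  qed
  show ?thesis using bin s1 s2 by blast
qed

definition Kp :: "real \<Rightarrow> real \<Rightarrow> bool" where
  "Kp u v \<longleftrightarrow> inK clD (65536 * u) (65536 * v)"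

lemma rep_final:
  fixes p q r al be ga de :: real
  assumes pb: "parbox al be ga de"
    and inv1: "\<And>w v. p * (al * w + be * v) + q * (de * v - ga * w) = w"
    and inv2: "\<And>w v. (al * w + be * v) + r * (de * v - ga * w) = v"
    and l1: "E1 p q r \<longlonglongrightarrow> 0" and l2: "E2 p q r \<longlonglongrightarrow> 0"
    and l3: "F1 p q r \<longlonglongrightarrow> 0" and l4: "F2 p q r \<longlonglongrightarrow> 0"
  shows "\<exists>b::nat\<Rightarrow>int. (\<forall>n. b n \<in> {-1,0,1}) \<and> (\<lambda>n. of_int (b n) * E1 p q r n) sums (- al)
            \<and> (\<lambda>n. of_int (b n) * E2 p q r n) sums ga"
proof (rule represent[OF _ _ inv1 inv2 l1 l2 l3 l4, of Kp])
  fix u v assume "Kp u v"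
  then show "\<exists>b::int. b \<in> {-1,0,1} \<and> Kp (al * (u - of_int b) + be * v) (de * v - ga * (u - of_int b))"
    unfolding Kp_def using check_all_sound[OF check_ok _ pb] by blast
next
  fix u v assume "Kp u v"
  then show "\<bar>u\<bar> \<le> 4 \<and> \<bar>v\<bar> \<le> 8" unfolding Kp_def using check_all_bound[OF check_ok] by blast
next
  have pb': "5792 \<le> 4096 * al" "4096 * al \<le> 5793" "8191 \<le> 4096 * ga" "4096 * ga \<le> 8193"
    using pb unfolding parbox_def by auto
  show "Kp (- al) ga" unfolding Kp_def
    by (rule seg_ok_sound[OF target_ok]) (use pb' in linarith)+
qed

lemma shift_sums:
  fixes x S :: "'a::{real_normed_field}"
  assumes "(\<lambda>n. of_int (b n) * x ^ n) sums S" "x * S = -1"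
  shows "(\<lambda>n. of_int (if n = 0 then 1 else b (n - 1)) * x ^ n) sums 0"
proof -
  let ?f = "\<lambda>n. of_int (if n = 0 then 1 else b (n - 1)) * x ^ n"
  have "(\<lambda>n. x * (of_int (b n) * x ^ n)) sums (x * S)" by (rule sums_mult[OF assms(1)])
  moreover have "(\<lambda>n. ?f (Suc n)) = (\<lambda>n. x * (of_int (b n) * x ^ n))" by (auto simp: algebra_simps)
  ultimately have "(\<lambda>n. ?f (Suc n)) sums (-1)" using assms(2) by simp
  then have "?f sums (-1 + ?f 0)" using sums_Suc_iff[of ?f "-1"] by simp
  then show ?thesis by simp
qed

lemma coeffsB_shift: "(\<forall>n. b n \<in> {-1,0,1}) \<Longrightarrow> (\<lambda>n. if n = 0 then 1 else b (n - 1)) \<in> coeffsB"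
  unfolding coeffsB_def by auto

lemma bser_of_sums: "(\<lambda>n. of_int (a n) * x ^ n) sums s \<Longrightarrow> bser a x = s"
  unfolding bser_def by (simp add: sums_iff)

lemma EF_N_aux:
  assumes "g \<noteq> l"
  shows "E1 g 0 l n = g ^ n \<and> E2 g 0 l n = (l ^ n - g ^ n) / (l - g) \<and> F1 g 0 l n = 0 \<and> F2 g 0 l n = l ^ n"
proof (induction n)
  case 0
  then show ?case by (simp add: EF_0)
next
  case (Suc n)
  have "g * ((l ^ n - g ^ n) / (l - g)) + l ^ n = (l ^ Suc n - g ^ Suc n) / (l - g)"
    using assms by (simp add: field_simps)
  then show ?case using Suc by (simp add: EF_Suc)
qed

lemma EF_O_aux:
  "E1 l 0 l n = l ^ n \<and> E2 l 0 l n = of_nat n * l ^ (n - 1) \<and> F1 l 0 l n = 0 \<and> F2 l 0 l n = l ^ n"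
proof (induction n)
  case 0
  then show ?case by (simp add: EF_0)
next
  case (Suc n)
  have "l * (of_nat n * l ^ (n - 1)) + l ^ n = of_nat (Suc n) * l ^ n"
    by (cases n) (simp_all add: algebra_simps)
  then show ?case using Suc by (simp add: EF_Suc)
qed

lemma EF_M_aux:
  assumes "t \<noteq> 0"
  shows "E1 s (- (t^2)) s n = Re (Complex s t ^ n) \<and> E2 s (- (t^2)) s n = Im (Complex s t ^ n) / t
     \<and> F1 s (- (t^2)) s n = - t * Im (Complex s t ^ n) \<and> F2 s (- (t^2)) s n = Re (Complex s t ^ n)"
proof (induction n)
  case 0
  then show ?case by (simp add: EF_0)
next
  case (Suc n)
  let ?w = "Complex s t ^ n"
  have r: "Re (Complex s t ^ Suc n) = s * Re ?w - t * Im ?w" and i: "Im (Complex s t ^ Suc n) = s * Im ?w + t * Re ?w"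
    by simp_all
  show ?case using Suc assms unfolding EF_Suc r i by (simp add: field_simps power2_eq_square)
qed

lemma EF_N:
  assumes "g \<noteq> l"
  shows "E1 g 0 l = (\<lambda>n. g ^ n)" "E2 g 0 l = (\<lambda>n. (l ^ n - g ^ n) / (l - g))"
    "F1 g 0 l = (\<lambda>n. 0)" "F2 g 0 l = (\<lambda>n. l ^ n)"
  using EF_N_aux[OF assms] by (auto intro!: ext)

lemma EF_O:
  shows "E1 l 0 l = (\<lambda>n. l ^ n)" "E2 l 0 l = (\<lambda>n. of_nat n * l ^ (n - 1))"
    "F1 l 0 l = (\<lambda>n. 0)" "F2 l 0 l = (\<lambda>n. l ^ n)"
  using EF_O_aux by (auto intro!: ext)

lemma EF_M:
  assumes "t \<noteq> 0"
  shows "E1 s (- (t^2)) s = (\<lambda>n. Re (Complex s t ^ n))" "E2 s (- (t^2)) s = (\<lambda>n. Im (Complex s t ^ n) / t)"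
     "F1 s (- (t^2)) s = (\<lambda>n. - t * Im (Complex s t ^ n))" "F2 s (- (t^2)) s = (\<lambda>n. Re (Complex s t ^ n))"
  using EF_M_aux[OF assms] by (auto intro!: ext)

lemma parbox_N:
  fixes g l :: real
  assumes "70707/100000 \<le> g" "g \<le> 70714/100000" "70707/100000 \<le> l" "l \<le> 70714/100000"
  shows "parbox (1/g) 0 (1/(g*l)) (1/l)"
proof -
  have gp: "g > 0" "l > 0" using assms by auto
  have gl1: "g * l \<le> (70714/100000) * (70714/100000)" using assms by (intro mult_mono) auto
  have gl2: "(70707/100000) * (70707/100000) \<le> g * l" using assms by (intro mult_mono) auto
  have glp: "g * l > 0" using gp by simp
  have a1: "5792 \<le> 4096 * (1/g)" using gp assms by (simp add: field_simps)
  have a2: "4096 * (1/g) \<le> 5793" using gp assms by (simp add: field_simps)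
  have a3: "5792 \<le> 4096 * (1/l)" using gp assms by (simp add: field_simps)
  have a4: "4096 * (1/l) \<le> 5793" using gp assms by (simp add: field_simps)
  have a5: "8191 \<le> 4096 * (1/(g*l))" using glp gl1 by (simp add: field_simps)
  have a6: "4096 * (1/(g*l)) \<le> 8193" using glp gl2 by (simp add: field_simps)
  show ?thesis unfolding parbox_def using a1 a2 a3 a4 a5 a6 by simp
qed

lemma caseN:
  fixes g l :: real
  assumes "g \<noteq> l" "70707/100000 \<le> g" "g \<le> 70714/100000" "70707/100000 \<le> l" "l \<le> 70714/100000"
  shows "\<exists>a\<in>coeffsB. bser a g = 0 \<and> bser a l = 0"
proof -
  have gp: "g > 0" "l > 0" "g < 1" "l < 1" using assms by auto
  have lg: "l - g \<noteq> 0" using assms by simp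
  have l1: "E1 g 0 l \<longlonglongrightarrow> 0" unfolding EF_N[OF assms(1)] using gp by (intro LIMSEQ_power_zero) simp
  have l2: "E2 g 0 l \<longlonglongrightarrow> 0"
  proof -
    have "(\<lambda>n. (l ^ n - g ^ n) / (l - g)) \<longlonglongrightarrow> (0 - 0) / (l - g)"
      using gp lg by (intro tendsto_intros LIMSEQ_power_zero) auto
    then show ?thesis unfolding EF_N[OF assms(1)] by simp
  qed
  have l3: "F1 g 0 l \<longlonglongrightarrow> 0" unfolding EF_N[OF assms(1)] by simp
  have l4: "F2 g 0 l \<longlonglongrightarrow> 0" unfolding EF_N[OF assms(1)] using gp by (intro LIMSEQ_power_zero) simp
  have inv1: "\<And>w v. g * ((1/g) * w + 0 * v) + 0 * ((1/l) * v - (1/(g*l)) * w) = w"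
    using gp by simp
  have inv2: "\<And>w v. ((1/g) * w + 0 * v) + l * ((1/l) * v - (1/(g*l)) * w) = v"
    using gp by (simp add: field_simps)
  obtain b :: "nat \<Rightarrow> int" where b: "\<forall>n. b n \<in> {-1,0,1}"
    "(\<lambda>n. of_int (b n) * E1 g 0 l n) sums (- (1/g))" "(\<lambda>n. of_int (b n) * E2 g 0 l n) sums (1/(g*l))"
    using rep_final[OF parbox_N[OF assms(2-5)] inv1 inv2 l1 l2 l3 l4] by blast
  define a where "a = (\<lambda>n. if n = 0 then 1 else b (n - 1))"
  have aB: "a \<in> coeffsB" unfolding a_def using b(1) by (rule coeffsB_shift)
  have sg: "(\<lambda>n. of_int (b n) * g ^ n) sums (- (1/g))" using b(2) unfolding EF_N[OF assms(1)] .
  have sd: "(\<lambda>n. of_int (b n) * ((l ^ n - g ^ n) / (l - g))) sums (1/(g*l))" using b(3) unfolding EF_N[OF assms(1)] .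
  have "(\<lambda>n. of_int (b n) * g ^ n + (l - g) * (of_int (b n) * ((l ^ n - g ^ n) / (l - g)))) sums (- (1/g) + (l - g) * (1/(g*l)))"
    by (intro sums_add sums_mult sg sd)
  moreover have "(\<lambda>n. of_int (b n) * g ^ n + (l - g) * (of_int (b n) * ((l ^ n - g ^ n) / (l - g)))) = (\<lambda>n. of_int (b n) * l ^ n)"
    using lg by (auto simp: field_simps)
  moreover have "- (1/g) + (l - g) * (1/(g*l)) = - (1/l)" using gp by (simp add: field_simps)
  ultimately have sl: "(\<lambda>n. of_int (b n) * l ^ n) sums (- (1/l))" by simp
  have "bser a g = 0" unfolding a_def
    by (rule bser_of_sums, rule shift_sums[OF sg]) (use gp in simp)
  moreover have "bser a l = 0" unfolding a_def
    by (rule bser_of_sums, rule shift_sums[OF sl]) (use gp in simp)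
  ultimately show ?thesis using aB by blast
qed

lemma parbox_O:
  fixes l :: real
  assumes "70707/100000 \<le> l" "l \<le> 70714/100000"
  shows "parbox (1/l) 0 (1/(l*l)) (1/l)"
  using parbox_N[OF assms assms] .

lemma caseO:
  fixes l :: real
  assumes "70707/100000 \<le> l" "l \<le> 70714/100000"
  shows "\<exists>a\<in>coeffsB. (\<lambda>n. of_int (a n) * l ^ n) sums 0 \<and> deriv (bser a) l = 0"
proof -
  have gp: "l > 0" "l < 1" using assms by auto
  have l1: "E1 l 0 l \<longlonglongrightarrow> 0" unfolding EF_O using gp by (intro LIMSEQ_power_zero) simp
  have l2: "E2 l 0 l \<longlonglongrightarrow> 0"
  proof -
    have "(\<lambda>n. of_nat n * l ^ n / l) \<longlonglongrightarrow> 0 / l"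
      using gp by (intro tendsto_intros powser_times_n_limit_0) auto
    moreover have "(\<lambda>n. of_nat n * l ^ n / l) = (\<lambda>n. of_nat n * l ^ (n - 1))"
    proof
      fix n show "of_nat n * l ^ n / l = of_nat n * l ^ (n - 1)"
        using gp by (cases n) (auto simp: field_simps)
    qed
    ultimately show ?thesis unfolding EF_O by simp
  qed
  have l3: "F1 l 0 l \<longlonglongrightarrow> 0" unfolding EF_O by simp
  have l4: "F2 l 0 l \<longlonglongrightarrow> 0" unfolding EF_O using gp by (intro LIMSEQ_power_zero) simp
  have inv1: "\<And>w v. l * ((1/l) * w + 0 * v) + 0 * ((1/l) * v - (1/(l*l)) * w) = w"
    using gp by simp
  have inv2: "\<And>w v. ((1/l) * w + 0 * v) + l * ((1/l) * v - (1/(l*l)) * w) = v"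
    using gp by (simp add: field_simps)
  obtain b :: "nat \<Rightarrow> int" where b: "\<forall>n. b n \<in> {-1,0,1}"
    "(\<lambda>n. of_int (b n) * E1 l 0 l n) sums (- (1/l))" "(\<lambda>n. of_int (b n) * E2 l 0 l n) sums (1/(l*l))"
    using rep_final[OF parbox_O[OF assms] inv1 inv2 l1 l2 l3 l4] by blast
  define a where "a = (\<lambda>n. if n = 0 then 1 else b (n - 1))"
  have aB: "a \<in> coeffsB" unfolding a_def using b(1) by (rule coeffsB_shift)
  have sl: "(\<lambda>n. of_int (b n) * l ^ n) sums (- (1/l))" using b(2) unfolding EF_O .
  have sd: "(\<lambda>n. of_int (b n) * (of_nat n * l ^ (n - 1))) sums (1/(l*l))" using b(3) unfolding EF_O .
  have s0: "(\<lambda>n. of_int (a n) * l ^ n) sums 0" unfolding a_def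
    by (rule shift_sums[OF sl]) (use gp in simp)
  define c :: "nat \<Rightarrow> real" where "c = (\<lambda>n. of_int (a n))"
  define K :: real where "K = (1 + l) / 2"
  have K: "l < K" "K < 1" "0 < K" using gp unfolding K_def by auto
  have sumK: "summable (\<lambda>n. c n * K ^ n)"
  proof (rule summable_comparison_test[OF _ summable_geometric[of K]])
    show "\<exists>N. \<forall>n\<ge>N. norm (c n * K ^ n) \<le> K ^ n"
    proof (intro exI allI impI)
      fix n :: nat
      have "a n \<in> {-1,0,1}" using aB unfolding coeffsB_def by auto
      then have "\<bar>c n\<bar> \<le> 1" unfolding c_def by auto
      then have "\<bar>c n\<bar> * K ^ n \<le> 1 * K ^ n" using K by (intro mult_right_mono) auto
      then show "norm (c n * K ^ n) \<le> K ^ n" using K by (simp add: abs_mult)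
    qed
    show "norm K < 1" using K by simp
  qed
  have D: "DERIV (\<lambda>x. \<Sum>n. c n * x ^ n) l :> (\<Sum>n. diffs c n * l ^ n)"
    by (rule termdiffs_strong[OF sumK]) (use K gp in simp)
  have fe: "bser a = (\<lambda>x. \<Sum>n. c n * x ^ n)" unfolding c_def by (rule ext) (simp add: bser_def)
  have "(\<lambda>n. of_int (b n) * l ^ n + l * (of_int (b n) * (of_nat n * l ^ (n - 1)))) sums (- (1/l) + l * (1/(l*l)))"
    by (intro sums_add sums_mult sl sd)
  moreover have "(\<lambda>n. of_int (b n) * l ^ n + l * (of_int (b n) * (of_nat n * l ^ (n - 1)))) = (\<lambda>n. diffs c n * l ^ n)"
  proof
    fix n
    show "of_int (b n) * l ^ n + l * (of_int (b n) * (of_nat n * l ^ (n - 1))) = diffs c n * l ^ n"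
      unfolding diffs_def c_def a_def by (cases n) (simp_all add: algebra_simps)
  qed
  moreover have "- (1/l) + l * (1/(l*l)) = 0" using gp by (simp add: field_simps)
  ultimately have "(\<lambda>n. diffs c n * l ^ n) sums 0" by simp
  then have "(\<Sum>n. diffs c n * l ^ n) = 0" by (simp add: sums_iff)
  then have "deriv (bser a) l = 0" using D fe by (simp add: DERIV_imp_deriv)
  then show ?thesis using aB s0 by blast
qed

lemma parbox_M:
  fixes s t :: real
  assumes "70707/100000 \<le> s" "s \<le> 70714/100000" "t^2 \<le> 1/10^10"
  shows "parbox (s / (s^2 + t^2)) (t^2 / (s^2 + t^2)) (1 / (s^2 + t^2)) (s / (s^2 + t^2))"
proof -
  define S where "S = s * s"
  define T where "T = t * t"
  have sp: "s > 0" using assms by auto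
  have t0: "T \<ge> 0" unfolding T_def by simp
  have tt: "T \<le> 1 / 10000000000" using assms(3) unfolding T_def by (simp add: power2_eq_square)
  have s1: "S \<le> (70714/100000) * s" unfolding S_def using assms sp by (intro mult_right_mono) auto
  have s2: "(70707/100000) * s \<le> S" unfolding S_def using assms sp by (intro mult_right_mono) auto
  have s3: "S \<le> (70714/100000) * (70714/100000)" unfolding S_def using assms by (intro mult_mono) auto
  have s4: "(70707/100000) * (70707/100000) \<le> S" unfolding S_def using assms by (intro mult_mono) auto
  have Deq: "s^2 + t^2 = S + T" unfolding S_def T_def by (simp add: power2_eq_square)
  have Dp: "S + T > 0" using s4 t0 by linarith
  have b1: "5792 * S + 5792 * T \<le> 4096 * s" using s1 tt assms(1) by linarith
  have b2: "4096 * s \<le> 5793 * S + 5793 * T" using s2 t0 assms(1) by linarith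
  have b5: "8191 * S + 8191 * T \<le> 4096" using s3 tt by linarith
  have b6: "4096 \<le> 8193 * S + 8193 * T" using s4 t0 by linarith
  have b8: "524288 * T \<le> S + T" using s4 tt t0 by linarith
  have a1: "5792 \<le> 4096 * (s / (S + T))" using b1 Dp by (simp add: pos_le_divide_eq algebra_simps)
  have a2: "4096 * (s / (S + T)) \<le> 5793" using b2 Dp by (simp add: pos_divide_le_eq algebra_simps)
  have a5: "8191 \<le> 4096 * (1 / (S + T))" using b5 Dp by (simp add: pos_le_divide_eq algebra_simps)
  have a6: "4096 * (1 / (S + T)) \<le> 8193" using b6 Dp by (simp add: pos_divide_le_eq algebra_simps)
  have a7: "0 \<le> T / (S + T)" using Dp t0 by simp
  have a8: "524288 * (T / (S + T)) \<le> 1" using b8 Dp by (simp add: pos_divide_le_eq algebra_simps)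
  have Teq: "t^2 = T" unfolding T_def by (simp add: power2_eq_square)
  show ?thesis unfolding parbox_def unfolding Deq unfolding Teq using a1 a2 a5 a6 a7 a8 by simp
qed

lemma caseM:
  fixes s t :: real
  assumes "70707/100000 \<le> s" "s \<le> 70714/100000" "t^2 \<le> 1/10^10" "t \<noteq> 0"
  shows "\<exists>a\<in>coeffsB. bser a (Complex s t) = 0"
proof -
  let ?z = "Complex s t"
  let ?D = "s^2 + t^2"
  have sp: "s > 0" using assms by auto
  have Dp: "?D > 0" using sp by (simp add: add_pos_nonneg)
  have nz: "norm ?z < 1"
  proof -
    have "?D < 1"
    proof -
      have "s * s \<le> (70714/100000) * (70714/100000)" using assms by (intro mult_mono) auto
      then show ?thesis using assms by (simp add: power2_eq_square)
    qed
    then show ?thesis by (simp add: cmod_def)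
  qed
  have zn: "(\<lambda>n. ?z ^ n) \<longlonglongrightarrow> 0" using nz by (rule LIMSEQ_power_zero)
  have zr: "(\<lambda>n. Re (?z ^ n)) \<longlonglongrightarrow> 0" using tendsto_Re[OF zn] by simp
  have zi: "(\<lambda>n. Im (?z ^ n)) \<longlonglongrightarrow> 0" using tendsto_Im[OF zn] by simp
  note EF = EF_M[OF assms(4)]
  have l1: "E1 s (- (t^2)) s \<longlonglongrightarrow> 0" unfolding EF using zr .
  have l2: "E2 s (- (t^2)) s \<longlonglongrightarrow> 0" unfolding EF using tendsto_divide[OF zi tendsto_const, of t] assms(4) by simp
  have l3: "F1 s (- (t^2)) s \<longlonglongrightarrow> 0" unfolding EF using tendsto_mult[OF tendsto_const zi, of "- t"] by simp
  have l4: "F2 s (- (t^2)) s \<longlonglongrightarrow> 0" unfolding EF using zr .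
  have Dq: "s * s + t * t \<noteq> 0"
  proof -
    have "0 < s * s" using sp by simp
    moreover have "0 \<le> t * t" by simp
    ultimately show ?thesis by linarith
  qed
  define k where "k = 1 / ?D"
  have kD: "k * (s * s + t * t) = 1" unfolding k_def using Dq by (simp add: power2_eq_square)
  have ek: "s / ?D = s * k" "t^2 / ?D = t * t * k" "1 / ?D = k" unfolding k_def by (simp_all add: power2_eq_square)
  have inv1: "\<And>w v. s * ((s / ?D) * w + (t^2 / ?D) * v) + (- (t^2)) * ((s / ?D) * v - (1 / ?D) * w) = w"
  proof -
    fix w v
    have "s * ((s * k) * w + (t * t * k) * v) + (- (t * t)) * ((s * k) * v - k * w) = w * (k * (s * s + t * t))"
      by (simp add: algebra_simps)
    then show "s * ((s / ?D) * w + (t^2 / ?D) * v) + (- (t^2)) * ((s / ?D) * v - (1 / ?D) * w) = w"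
      unfolding ek kD by (simp add: power2_eq_square)
  qed
  have inv2: "\<And>w v. ((s / ?D) * w + (t^2 / ?D) * v) + s * ((s / ?D) * v - (1 / ?D) * w) = v"
  proof -
    fix w v
    have "((s * k) * w + (t * t * k) * v) + s * ((s * k) * v - k * w) = v * (k * (s * s + t * t))"
      by (simp add: algebra_simps)
    then show "((s / ?D) * w + (t^2 / ?D) * v) + s * ((s / ?D) * v - (1 / ?D) * w) = v"
      unfolding ek kD by simp
  qed
  obtain b :: "nat \<Rightarrow> int" where b: "\<forall>n. b n \<in> {-1,0,1}"
    "(\<lambda>n. of_int (b n) * E1 s (- (t^2)) s n) sums (- (s / ?D))" "(\<lambda>n. of_int (b n) * E2 s (- (t^2)) s n) sums (1 / ?D)"
    using rep_final[OF parbox_M[OF assms(1-3)] inv1 inv2 l1 l2 l3 l4] by blast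
  define a where "a = (\<lambda>n. if n = 0 then 1 else b (n - 1))"
  have aB: "a \<in> coeffsB" unfolding a_def using b(1) by (rule coeffsB_shift)
  have sr: "(\<lambda>n. of_int (b n) * Re (?z ^ n)) sums (- (s / ?D))" using b(2) unfolding EF .
  have si0: "(\<lambda>n. of_int (b n) * (Im (?z ^ n) / t)) sums (1 / ?D)" using b(3) unfolding EF .
  have si: "(\<lambda>n. of_int (b n) * Im (?z ^ n)) sums (t / ?D)"
  proof -
    have "(\<lambda>n. t * (of_int (b n) * (Im (?z ^ n) / t))) sums (t * (1 / ?D))" by (rule sums_mult[OF si0])
    moreover have "(\<lambda>n. t * (of_int (b n) * (Im (?z ^ n) / t))) = (\<lambda>n. of_int (b n) * Im (?z ^ n))"
      using assms(4) by (auto simp: field_simps)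
    ultimately show ?thesis by simp
  qed
  have sz: "(\<lambda>n. of_int (b n) * ?z ^ n) sums Complex (- (s / ?D)) (t / ?D)"
    unfolding sums_complex_iff using sr si by simp
  have prod: "?z * Complex (- (s / ?D)) (t / ?D) = -1"
  proof -
    have e2: "t / ?D = t * k" unfolding k_def by simp
    have "Re (?z * Complex (- (s * k)) (t * k)) = - (k * (s * s + t * t))" by (simp add: algebra_simps)
    moreover have "Im (?z * Complex (- (s * k)) (t * k)) = 0" by (simp add: algebra_simps)
    ultimately have "?z * Complex (- (s * k)) (t * k) = -1" using kD by (simp add: complex_eq_iff)
    then show ?thesis unfolding e2 ek(1) .
  qed
  have "bser a ?z = 0" unfolding a_def
    by (rule bser_of_sums, rule shift_sums[OF sz prod])
  then show ?thesis using aB by blast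
qed

lemma eta_val: "4 * (10::real) powr (-6) = 4 / 1000000"
  by (simp add: powr_minus powr_numeral)

lemma isqrt2_bounds: "70710675/100000000 < 1 / sqrt 2 \<and> 1 / sqrt 2 < 70710680/100000000"
proof -
  have a: "14142135/10000000 < sqrt 2" by (rule real_less_rsqrt) (simp add: power2_eq_square)
  have b: "sqrt 2 < 14142136/10000000" by (rule real_less_lsqrt) (simp_all add: power2_eq_square)
  have e: "1 / sqrt 2 = sqrt 2 / 2"
    by (simp add: field_simps)
  show ?thesis unfolding e using a b by simp
qed

lemma caseO_full:
  fixes l :: real
  assumes "70707/100000 \<le> l" "l \<le> 70714/100000"
  shows "\<exists>a\<in>coeffsB. bser a l = 0 \<and> deriv (bser a) l = 0"
  using caseO[OF assms] bser_of_sums by blast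

theorem theorem2p10:
  fixes \<eta> :: real
  assumes "\<eta> = 4 * 10 powr (-6)"
  shows "{(g, l). g \<in> {0<..<1} \<and> l \<in> {0<..<1} \<and>
            \<bar>g - 1 / sqrt 2\<bar> < \<eta> \<and> \<bar>l - 1 / sqrt 2\<bar> < \<eta>} \<subseteq> setN \<and>
         {z. norm z < 1 \<and> norm (z - complex_of_real (1 / sqrt 2)) < 3 * \<eta> / 4} \<subseteq> setM \<and>
         {l. l \<in> {0<..<1} \<and> \<bar>l - 1 / sqrt 2\<bar> < \<eta>} \<subseteq> setO"
proof -
  have eta: "\<eta> = 4 / 1000000" using assms eta_val by simp
  have cb: "70710675/100000000 < 1 / sqrt 2" "1 / sqrt 2 < 70710680/100000000" using isqrt2_bounds by auto
  have box: "70707/100000 \<le> x \<and> x \<le> 70714/100000" if "\<bar>x - 1 / sqrt 2\<bar> < \<eta>" for x :: real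
  proof -
    have "- \<eta> < x - 1 / sqrt 2" "x - 1 / sqrt 2 < \<eta>" using that unfolding abs_less_iff by auto
    then show ?thesis using cb eta by linarith
  qed
  have P1: "{(g, l). g \<in> {0<..<1} \<and> l \<in> {0<..<1} \<and>
            \<bar>g - 1 / sqrt 2\<bar> < \<eta> \<and> \<bar>l - 1 / sqrt 2\<bar> < \<eta>} \<subseteq> setN"
  proof (rule subsetI)
    fix x assume "x \<in> {(g, l). g \<in> {0<..<1} \<and> l \<in> {0<..<1} \<and>
            \<bar>g - 1 / sqrt 2\<bar> < \<eta> \<and> \<bar>l - 1 / sqrt 2\<bar> < \<eta>}"
    then obtain g l where x: "x = (g, l)" "g \<in> {0<..<1}" "l \<in> {0<..<1}"
      "\<bar>g - 1 / sqrt 2\<bar> < \<eta>" "\<bar>l - 1 / sqrt 2\<bar> < \<eta>" by blast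
    have bg: "70707/100000 \<le> g" "g \<le> 70714/100000" using box[OF x(4)] by auto
    have bl: "70707/100000 \<le> l" "l \<le> 70714/100000" using box[OF x(5)] by auto
    have "\<exists>a\<in>coeffsB. bser a g = 0 \<and> bser a l = 0"
    proof (cases "g = l")
      case True
      then show ?thesis using caseO_full[OF bl] by auto
    next
      case False
      then show ?thesis using caseN[OF False bg bl] by auto
    qed
    then show "x \<in> setN" unfolding setN_def using x by auto
  qed
  have P2: "{z. norm z < 1 \<and> norm (z - complex_of_real (1 / sqrt 2)) < 3 * \<eta> / 4} \<subseteq> setM"
  proof (rule subsetI)
    fix z assume "z \<in> {z. norm z < 1 \<and> norm (z - complex_of_real (1 / sqrt 2)) < 3 * \<eta> / 4}"
    then have z: "norm z < 1" "norm (z - complex_of_real (1 / sqrt 2)) < 3 / 1000000" using eta by auto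
    define s where "s = Re z"
    define t where "t = Im z"
    have zst: "z = Complex s t" unfolding s_def t_def by simp
    have "\<bar>Re (z - complex_of_real (1 / sqrt 2))\<bar> \<le> norm (z - complex_of_real (1 / sqrt 2))"
      by (rule abs_Re_le_cmod)
    then have sb: "\<bar>s - 1 / sqrt 2\<bar> < 3 / 1000000" using z(2) unfolding s_def by simp
    have "- (3 / 1000000) < s - 1 / sqrt 2" "s - 1 / sqrt 2 < 3 / 1000000" using sb unfolding abs_less_iff by auto
    then have bs: "70707/100000 \<le> s" "s \<le> 70714/100000" using cb by linarith+
    have "\<bar>Im (z - complex_of_real (1 / sqrt 2))\<bar> \<le> norm (z - complex_of_real (1 / sqrt 2))"
      by (rule abs_Im_le_cmod)
    then have tb: "\<bar>t\<bar> < 3 / 1000000" using z(2) unfolding t_def by simp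
    have "\<bar>t\<bar> * \<bar>t\<bar> \<le> (3 / 1000000) * (3 / 1000000)" using tb by (intro mult_mono) auto
    then have t2: "t^2 \<le> 1/10^10" by (simp add: power2_eq_square abs_mult[symmetric])
    have "\<exists>a\<in>coeffsB. bser a z = 0"
    proof (cases "t = 0")
      case True
      obtain a where a: "a \<in> coeffsB" "(\<lambda>n. of_int (a n) * s ^ n) sums 0" using caseO[OF bs] by blast
      have "(\<lambda>n. of_real (of_int (a n) * s ^ n) :: complex) sums of_real 0"
        using a(2) by (simp only: sums_of_real_iff)
      then have "(\<lambda>n. of_int (a n) * complex_of_real s ^ n) sums 0" by simp
      moreover have "z = complex_of_real s" using True zst by (simp add: complex_eq_iff)
      ultimately have "bser a z = 0" by (simp add: bser_of_sums)
      then show ?thesis using a(1) by blast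
    next
      case False
      then show ?thesis using caseM[OF bs t2 False] zst by simp
    qed
    then show "z \<in> setM" unfolding setM_def using z(1) by auto
  qed
  have P3: "{l. l \<in> {0<..<1} \<and> \<bar>l - 1 / sqrt 2\<bar> < \<eta>} \<subseteq> setO"
  proof (rule subsetI)
    fix l assume "l \<in> {l. l \<in> {0<..<1} \<and> \<bar>l - 1 / sqrt 2\<bar> < \<eta>}"
    then have l: "l \<in> {0<..<1}" "\<bar>l - 1 / sqrt 2\<bar> < \<eta>" by auto
    have bl: "70707/100000 \<le> l" "l \<le> 70714/100000" using box[OF l(2)] by auto
    show "l \<in> setO" unfolding setO_def using caseO_full[OF bl] l(1) by auto
  qed
  show ?thesis using P1 P2 P3 by blast
qed

end
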